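(* Let $(F,\phi)$ be an acyclic extended representation graph for $E$, let $w\in F^0$, and let $p,q$ be paths in $F$ (of length $\ge0$) with source $w$. Then $r(p)=r(q)$ if and only if $p=q$.
   Context: $E$ is a row-finite directed graph with, for each vertex $v$ emitting an edge, a chosen special edge $e^v\in s^{-1}(v)$; other edges are nonspecial. The double graph $E_d$ has vertices $E^0$ and edges $e$ (real) and $e^*$ (ghost) for $e\in E^1$, with $s_d(e)=s(e),r_d(e)=r(e),s_d(e^* )=r(e),r_d(e^* )=s(e)$. Paths of length $0$ are vertices $w$ with $s(w)=r(w)=w$. A graph is acyclic if it contains no cycle (closed path of length $\ge1$ with pairwise distinct vertex sources). An extended representation graph for $E$ is a pair $(F,\phi)$, $F$ a directed graph, $\phi:F\to E_d$ a graph homomorphism, such that for every $w\in F^0$: (i) $w$ is a source or receives exactly one edge $f_w$; (ii) if $w$ is a source or $\phi(f_w)$ is a nonspecial real edge, $\phi$ maps $s^{-1}(w)$ bijectively onto $s_d^{-1}(\phi(w))$; (iii) if $\phi(f_w)$ is a special real edge, onto $s_d^{-1}(\phi(w))\setminus\{\phi(f_w)^*\}$; (iv) if $\phi(f_w)$ is a ghost edge, onto the ghost edges in $s_d^{-1}(\phi(w))$. *)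

theory Defs
  imports Main
begin

record ('v, 'e) dgraph =
  verts :: "'v set"
  arcs  :: "'e set"
  src   :: "'e \<Rightarrow> 'v"
  rng   :: "'e \<Rightarrow> 'v"

definition wf_graph :: "('v, 'e) dgraph \<Rightarrow> bool" where
  "wf_graph G \<longleftrightarrow> (\<forall>e\<in>arcs G. src G e \<in> verts G \<and> rng G e \<in> verts G)"

definition row_finite :: "('v, 'e) dgraph \<Rightarrow> bool" where
  "row_finite G \<longleftrightarrow> (\<forall>v\<in>verts G. finite {e\<in>arcs G. src G e = v})"

definition special_choice :: "('v, 'e) dgraph \<Rightarrow> ('v \<Rightarrow> 'e) \<Rightarrow> bool" where
  "special_choice G sp \<longleftrightarrow>
     (\<forall>v\<in>verts G. (\<exists>e\<in>arcs G. src G e = v) \<longrightarrow> sp v \<in> arcs G \<and> src G (sp v) = v)"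

datatype 'e dedge = Real 'e | Ghost 'e

definition double_graph :: "('v, 'e) dgraph \<Rightarrow> ('v, 'e dedge) dgraph" where
  "double_graph G = \<lparr> verts = verts G,
     arcs = Real ` arcs G \<union> Ghost ` arcs G,
     src = (\<lambda>x. case x of Real e \<Rightarrow> src G e | Ghost e \<Rightarrow> rng G e),
     rng = (\<lambda>x. case x of Real e \<Rightarrow> rng G e | Ghost e \<Rightarrow> src G e) \<rparr>"

definition is_special_real :: "('v, 'e) dgraph \<Rightarrow> ('v \<Rightarrow> 'e) \<Rightarrow> 'e dedge \<Rightarrow> bool" where
  "is_special_real G sp x \<longleftrightarrow> (\<exists>e. x = Real e \<and> e = sp (src G e))"

definition is_nonspecial_real :: "('v, 'e) dgraph \<Rightarrow> ('v \<Rightarrow> 'e) \<Rightarrow> 'e dedge \<Rightarrow> bool" where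
  "is_nonspecial_real G sp x \<longleftrightarrow> (\<exists>e. x = Real e \<and> e \<noteq> sp (src G e))"

definition is_ghost :: "'e dedge \<Rightarrow> bool" where
  "is_ghost x \<longleftrightarrow> (\<exists>e. x = Ghost e)"

definition star :: "'e dedge \<Rightarrow> 'e dedge" where
  "star x = (case x of Real e \<Rightarrow> Ghost e | Ghost e \<Rightarrow> Real e)"

definition graph_hom :: "('a, 'b) dgraph \<Rightarrow> ('v, 'e) dgraph \<Rightarrow> ('a \<Rightarrow> 'v) \<Rightarrow> ('b \<Rightarrow> 'e) \<Rightarrow> bool" where
  "graph_hom F G \<phi>0 \<phi>1 \<longleftrightarrow>
     (\<forall>w\<in>verts F. \<phi>0 w \<in> verts G) \<and>
     (\<forall>f\<in>arcs F. \<phi>1 f \<in> arcs G \<and> src G (\<phi>1 f) = \<phi>0 (src F f) \<and> rng G (\<phi>1 f) = \<phi>0 (rng F f))"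

definition in_edges :: "('a, 'b) dgraph \<Rightarrow> 'a \<Rightarrow> 'b set" where
  "in_edges F w = {f\<in>arcs F. rng F f = w}"

definition out_edges :: "('a, 'b) dgraph \<Rightarrow> 'a \<Rightarrow> 'b set" where
  "out_edges F w = {f\<in>arcs F. src F f = w}"

definition is_source :: "('a, 'b) dgraph \<Rightarrow> 'a \<Rightarrow> bool" where
  "is_source F w \<longleftrightarrow> in_edges F w = {}"

definition recv_edge :: "('a, 'b) dgraph \<Rightarrow> 'a \<Rightarrow> 'b" where
  "recv_edge F w = (THE f. f \<in> in_edges F w)"

definition ext_rep_graph ::
  "('v, 'e) dgraph \<Rightarrow> ('v \<Rightarrow> 'e) \<Rightarrow> ('a, 'b) dgraph \<Rightarrow> ('a \<Rightarrow> 'v) \<Rightarrow> ('b \<Rightarrow> 'e dedge) \<Rightarrow> bool" where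
  "ext_rep_graph E sp F \<phi>0 \<phi>1 \<longleftrightarrow>
     wf_graph F \<and> graph_hom F (double_graph E) \<phi>0 \<phi>1 \<and>
     (\<forall>w\<in>verts F.
        (is_source F w \<or> (\<exists>!f. f \<in> in_edges F w)) \<and>
        ((is_source F w \<or> is_nonspecial_real E sp (\<phi>1 (recv_edge F w))) \<longrightarrow>
            bij_betw \<phi>1 (out_edges F w) (out_edges (double_graph E) (\<phi>0 w))) \<and>
        ((\<not> is_source F w \<and> is_special_real E sp (\<phi>1 (recv_edge F w))) \<longrightarrow>
            bij_betw \<phi>1 (out_edges F w)
              (out_edges (double_graph E) (\<phi>0 w) - {star (\<phi>1 (recv_edge F w))})) \<and>
        ((\<not> is_source F w \<and> is_ghost (\<phi>1 (recv_edge F w))) \<longrightarrow>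
            bij_betw \<phi>1 (out_edges F w)
              {x \<in> out_edges (double_graph E) (\<phi>0 w). is_ghost x}))"

text \<open>Paths: a start vertex together with a list of edges; the empty list
  gives the path of length 0 at that vertex.\<close>
definition is_path :: "('a, 'b) dgraph \<Rightarrow> 'a \<times> 'b list \<Rightarrow> bool" where
  "is_path F p \<longleftrightarrow> (case p of (v, es) \<Rightarrow>
      v \<in> verts F \<and> set es \<subseteq> arcs F \<and>
      (es \<noteq> [] \<longrightarrow> src F (hd es) = v) \<and>
      (\<forall>i. Suc i < length es \<longrightarrow> rng F (es ! i) = src F (es ! Suc i)))"

definition path_src :: "('a, 'b) dgraph \<Rightarrow> 'a \<times> 'b list \<Rightarrow> 'a" where
  "path_src F p = fst p"

definition path_rng :: "('a, 'b) dgraph \<Rightarrow> 'a \<times> 'b list \<Rightarrow> 'a" where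
  "path_rng F p = (if snd p = [] then fst p else rng F (last (snd p)))"

definition is_cycle :: "('a, 'b) dgraph \<Rightarrow> 'a \<times> 'b list \<Rightarrow> bool" where
  "is_cycle F p \<longleftrightarrow> is_path F p \<and> snd p \<noteq> [] \<and> path_rng F p = path_src F p \<and>
     distinct (map (src F) (snd p))"

definition acyclic_graph :: "('a, 'b) dgraph \<Rightarrow> bool" where
  "acyclic_graph F \<longleftrightarrow> \<not> (\<exists>p. is_cycle F p)"

end

theory Submission
  imports Defs
begin

lemma path_butlast:
  assumes "is_path F (w, es)" "es \<noteq> []"
  shows "is_path F (w, butlast es) \<and> path_rng F (w, butlast es) = src F (last es)"
proof -
  have A: "set (butlast es) \<subseteq> arcs F" using assms by (auto simp: is_path_def dest: in_set_butlastD)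
  have B: "butlast es \<noteq> [] \<longrightarrow> src F (hd (butlast es)) = w"
    using assms unfolding is_path_def by (cases es; auto)
  have C: "\<forall>i. Suc i < length (butlast es) \<longrightarrow> rng F (butlast es ! i) = src F (butlast es ! Suc i)"
    using assms unfolding is_path_def by (auto simp: nth_butlast)
  have D: "path_rng F (w, butlast es) = src F (last es)"
  proof (cases "butlast es = []")
    case True
    then obtain a where "es = [a]" using assms(2) by (cases es) (auto split: if_splits simp: Suc_le_eq)
    then show ?thesis using assms unfolding is_path_def path_rng_def by auto
  next
    case False
    let ?n = "length es"
    have n: "?n \<ge> 2" using False assms(2) by (cases es) (auto split: if_splits simp: Suc_le_eq)
    have "last (butlast es) = butlast es ! (?n - 2)" using False by (simp add: last_conv_nth numeral_2_eq_2)
    also have "\<dots> = es ! (?n - 2)" using n by (simp add: nth_butlast)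
    finally have "last (butlast es) = es ! (?n - 2)" .
    moreover have "last es = es ! Suc (?n - 2)"
    proof -
      have "Suc (?n - 2) = ?n - 1" using n by linarith
      then show ?thesis using assms(2) by (simp add: last_conv_nth)
    qed
    moreover have "rng F (es ! (?n - 2)) = src F (es ! Suc (?n - 2))"
      using assms(1) n unfolding is_path_def by auto
    ultimately show ?thesis using False unfolding path_rng_def by simp
  qed
  show ?thesis using A B C D assms(1) unfolding is_path_def by auto
qed

lemma closed_walk_cycle:
  assumes "wf_graph F" "is_path F (v, es)" "es \<noteq> []" "rng F (last es) = v"
  shows "\<exists>p. is_cycle F p"
  using assms(2-)
proof (induction "length es" arbitrary: v es rule: less_induct)
  case less
  show ?case
  proof (cases "distinct (map (src F) es)")
    case True
    then have "is_cycle F (v, es)" using less.prems unfolding is_cycle_def path_rng_def path_src_def by auto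
    then show ?thesis by blast
  next
    case False
    then obtain i j where ij: "i < j" "j < length es" "src F (es ! i) = src F (es ! j)"
    proof -
      obtain a b where ab: "a < length es" "b < length es" "a \<noteq> b" "src F (es ! a) = src F (es ! b)"
        using False unfolding distinct_conv_nth by force
      show ?thesis
      proof (cases "a < b")
        case True show ?thesis by (rule that[of a b]) (use ab True in auto)
      next
        case False show ?thesis by (rule that[of b a]) (use ab False in auto)
      qed
    qed
    define ds where "ds = take (j - i) (drop i es)"
    have len: "length ds = j - i" using ij unfolding ds_def by simp
    have nth: "\<And>k. k < j - i \<Longrightarrow> ds ! k = es ! (i + k)" using ij unfolding ds_def by simp
    have ne: "ds \<noteq> []" using len ij by auto
    have P: "is_path F (src F (es ! i), ds)"
    proof -
      have "set ds \<subseteq> set es" unfolding ds_def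
        by (meson order_trans set_drop_subset set_take_subset)
      then have "set ds \<subseteq> arcs F" using less.prems(1) unfolding is_path_def by auto
      moreover have "src F (hd ds) = src F (es ! i)" using nth[of 0] ne len ij by (simp add: hd_conv_nth)
      moreover have "\<forall>k. Suc k < length ds \<longrightarrow> rng F (ds ! k) = src F (ds ! Suc k)"
      proof (intro allI impI)
        fix k assume "Suc k < length ds"
        then have "Suc (i + k) < length es" using len ij by auto
        then have "rng F (es ! (i + k)) = src F (es ! Suc (i + k))" using less.prems(1) unfolding is_path_def by auto
        then show "rng F (ds ! k) = src F (ds ! Suc k)" using nth \<open>Suc k < length ds\<close> len by simp
      qed
      moreover have "src F (es ! i) \<in> verts F"
      proof -
        have "es ! j \<in> arcs F" using less.prems(1) ij unfolding is_path_def by auto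
        then show ?thesis using ij(3) \<open>wf_graph F\<close> unfolding wf_graph_def by auto
      qed
      ultimately show ?thesis unfolding is_path_def by auto
    qed
    have "last ds = es ! (j - 1)" using ne len nth ij by (simp add: last_conv_nth)
    moreover have "rng F (es ! (j - 1)) = src F (es ! j)"
    proof -
      have "Suc (j - 1) < length es" "Suc (j - 1) = j" using ij by auto
      moreover have "\<forall>i. Suc i < length es \<longrightarrow> rng F (es ! i) = src F (es ! Suc i)"
        using less.prems(1) unfolding is_path_def by simp
      ultimately show ?thesis by metis
    qed
    ultimately have "rng F (last ds) = src F (es ! i)" using ij by simp
    moreover have "length ds < length es" using len ij by auto
    ultimately show ?thesis using less.hyps[OF _ P ne] by simp
  qed
qed

lemma in_le_one:
  assumes "ext_rep_graph E sp F \<phi>0 \<phi>1" "v \<in> verts F"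
    "f \<in> arcs F" "rng F f = v" "g \<in> arcs F" "rng F g = v"
  shows "f = g"
proof -
  have "f \<in> in_edges F v" "g \<in> in_edges F v" using assms unfolding in_edges_def by auto
  moreover have "is_source F v \<or> (\<exists>!f. f \<in> in_edges F v)"
    using assms(1,2) unfolding ext_rep_graph_def by blast
  ultimately show ?thesis unfolding is_source_def by auto
qed

lemma paths_unique:
  assumes "ext_rep_graph E sp F \<phi>0 \<phi>1" "acyclic_graph F"
  shows "is_path F (w, es) \<Longrightarrow> is_path F (w, fs) \<Longrightarrow>
     path_rng F (w, es) = path_rng F (w, fs) \<Longrightarrow> es = fs"
proof (induction "length es + length fs" arbitrary: es fs rule: less_induct)
  case less
  have wf: "wf_graph F" using assms(1) unfolding ext_rep_graph_def by blast
  have nocyc: "\<not> is_cycle F p" for p using assms(2) unfolding acyclic_graph_def by blast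
  show ?case
  proof (cases "es = []")
    case True
    show ?thesis
    proof (rule ccontr)
      assume "es \<noteq> fs"
      then have "fs \<noteq> []" using True by simp
      then have "rng F (last fs) = w" using less.prems True unfolding path_rng_def by simp
      then show False using closed_walk_cycle[OF wf less.prems(2) \<open>fs \<noteq> []\<close>] nocyc by blast
    qed
  next
    case esne: False
    show ?thesis
    proof (cases "fs = []")
      case True
      then have "rng F (last es) = w" using less.prems esne unfolding path_rng_def by simp
      then show ?thesis using closed_walk_cycle[OF wf less.prems(1) esne] nocyc by blast
    next
      case fsne: False
      have ea: "last es \<in> arcs F" using less.prems(1) esne unfolding is_path_def by auto
      have fa: "last fs \<in> arcs F" using less.prems(2) fsne unfolding is_path_def by auto
      have rr: "rng F (last es) = rng F (last fs)" using less.prems(3) esne fsne unfolding path_rng_def by simp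
      have "rng F (last es) \<in> verts F" using ea wf unfolding wf_graph_def by auto
      then have L: "last es = last fs" using in_le_one[OF assms(1) _ ea refl fa] rr by metis
      have B1: "is_path F (w, butlast es) \<and> path_rng F (w, butlast es) = src F (last es)"
        using path_butlast[OF less.prems(1) esne] .
      have B2: "is_path F (w, butlast fs) \<and> path_rng F (w, butlast fs) = src F (last fs)"
        using path_butlast[OF less.prems(2) fsne] .
      have "length (butlast es) + length (butlast fs) < length es + length fs" using esne fsne by (cases es; cases fs) auto
      then have "butlast es = butlast fs" using less.hyps B1 B2 L by metis
      then show ?thesis using L esne fsne by (metis append_butlast_last_id)
    qed
  qed
qed

theorem lemma5p10:
  fixes E :: "('v, 'e) dgraph" and sp :: "'v \<Rightarrow> 'e"
    and F :: "('a, 'b) dgraph" and \<phi>0 :: "'a \<Rightarrow> 'v" and \<phi>1 :: "'b \<Rightarrow> 'e dedge"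
    and w :: 'a and p q :: "'a \<times> 'b list"
  assumes "wf_graph E" and "row_finite E" and "special_choice E sp"
    and "ext_rep_graph E sp F \<phi>0 \<phi>1"
    and "acyclic_graph F"
    and "w \<in> verts F"
    and "is_path F p" and "path_src F p = w"
    and "is_path F q" and "path_src F q = w"
  shows "path_rng F p = path_rng F q \<longleftrightarrow> p = q"
proof
  assume h: "path_rng F p = path_rng F q"
  obtain es where p: "p = (w, es)" using assms(8) unfolding path_src_def by (cases p) auto
  obtain fs where q: "q = (w, fs)" using assms(10) unfolding path_src_def by (cases q) auto
  show "p = q" using paths_unique[OF assms(4,5), of w es fs] assms(7,9) h p q by simp
qed simp

end
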